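(* Let $\Omega$ be a domain in $\mathbb{C}$. (1) If $\Omega$ satisfies $(\Delta)_{1,\alpha}$ for some $\alpha>1$, then there exists $\alpha'>\alpha$ such that $\partial\Omega$ satisfies $(U)_{1,\alpha'}$. (2) If $\Omega$ satisfies $(\Delta)_{2,\beta}$ for some $\beta>0$, then there exists $\beta'>\beta$ such that $\partial\Omega$ satisfies $(U)_{2,\beta'}$.
   Context: For $a\in\partial\Omega$ and $r>0$, $w_{a,r}$ denotes the harmonic measure of $\Omega\cap\partial D(a,r)$ relative to $\Omega\cap D(a,r)$. For an increasing function $h$, $\Omega$ satisfies $(\Delta)_h$ if there exist $\varepsilon\in(0,1)$ and $r_0>0$ such that $w_{a,r}(z)\le1-\varepsilon$ for every $a\in\partial\Omega$, $r\in(0,r_0)$ and $z\in\Omega\cap\partial D(a,h(r))$. With $h_{1,\alpha}(t)=t^\alpha$ ($\alpha>1$) and $h_{2,\beta}(t)=t(\log\frac1t)^{-\beta}$ ($\beta>0$), $\Omega$ satisfies $(\Delta)_{1,\alpha}$ (resp. $(\Delta)_{2,\beta}$) if there is $C>0$ such that $\Omega$ satisfies $(\Delta)_{Ch_{1,\alpha}}$ (resp. $(\Delta)_{Ch_{2,\beta}}$). For an increasing function $h$ on $[0,r_0)$ with $h(r)\le r$, a closed set $K\subset\mathbb{C}$ is $h$-uniformly perfect if $\{z: h(r)\le|z-a|\le r\}\cap K\neq\emptyset$ for every $a\in K$ and $r\in(0,r_0)$; a closed set satisfies $(U)_{1,\alpha}$ (resp. $(U)_{2,\beta}$) if there exist $C>0$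 and $r_0>0$ such that it is $Ch_{1,\alpha}$-uniformly perfect (resp. $Ch_{2,\beta}$-uniformly perfect) with that $r_0$. *)

theory Defs
  imports "HOL-Analysis.Analysis"
begin

text \<open>Superharmonic functions (real valued; lower semicontinuous with the
  super-mean-value property on circles whose closed disc lies in G).\<close>
definition superharmonic_on :: "complex set \<Rightarrow> (complex \<Rightarrow> real) \<Rightarrow> bool" where
  "superharmonic_on G u \<longleftrightarrow>
     (\<forall>z\<in>G. \<forall>e>0. \<forall>\<^sub>F w in at z within G. u z - e < u w) \<and>
     (\<forall>z \<rho>. 0 < \<rho> \<and> cball z \<rho> \<subseteq> G \<longrightarrow>
        (\<lambda>t. u (z + of_real \<rho> * cis t)) integrable_on {0..2*pi} \<and>
        integral {0..2*pi} (\<lambda>t. u (z + of_real \<rho> * cis t)) / (2*pi) \<le> u z)"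

text \<open>Harmonic measure of E relative to G at z: the upper Perron solution of
  the Dirichlet problem on G with boundary data the indicator of E.\<close>
definition harmonic_measure :: "complex set \<Rightarrow> complex set \<Rightarrow> complex \<Rightarrow> real" where
  "harmonic_measure G E z = Inf {u z | u. superharmonic_on G u \<and> (\<forall>w. 0 \<le> u w \<and> u w \<le> 1) \<and>
       (\<forall>\<zeta>\<in>frontier G. \<forall>e>0. \<forall>\<^sub>F w in at \<zeta> within G. indicator E \<zeta> - e \<le> u w)}"

definition w_ar :: "complex set \<Rightarrow> complex \<Rightarrow> real \<Rightarrow> complex \<Rightarrow> real" where
  "w_ar \<Omega> a r = harmonic_measure (\<Omega> \<inter> ball a r) (\<Omega> \<inter> sphere a r)"

definition Delta_cond :: "(real \<Rightarrow> real) \<Rightarrow> complex set \<Rightarrow> bool" where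
  "Delta_cond h \<Omega> \<longleftrightarrow> (\<exists>\<epsilon>. 0 < \<epsilon> \<and> \<epsilon> < 1 \<and> (\<exists>r0>0. \<forall>a\<in>frontier \<Omega>. \<forall>r. 0 < r \<and> r < r0 \<longrightarrow>
      (\<forall>z\<in>\<Omega> \<inter> sphere a (h r). w_ar \<Omega> a r z \<le> 1 - \<epsilon>)))"

definition h1 :: "real \<Rightarrow> real \<Rightarrow> real" where
  "h1 \<alpha> t = t powr \<alpha>"

definition h2 :: "real \<Rightarrow> real \<Rightarrow> real" where
  "h2 \<beta> t = t * (ln (1 / t)) powr (- \<beta>)"

definition Delta1 :: "real \<Rightarrow> complex set \<Rightarrow> bool" where
  "Delta1 \<alpha> \<Omega> \<longleftrightarrow> (\<exists>C>0. Delta_cond (\<lambda>t. C * h1 \<alpha> t) \<Omega>)"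

definition Delta2 :: "real \<Rightarrow> complex set \<Rightarrow> bool" where
  "Delta2 \<beta> \<Omega> \<longleftrightarrow> (\<exists>C>0. Delta_cond (\<lambda>t. C * h2 \<beta> t) \<Omega>)"

definition unif_perfect :: "(real \<Rightarrow> real) \<Rightarrow> real \<Rightarrow> complex set \<Rightarrow> bool" where
  "unif_perfect h r0 K \<longleftrightarrow> closed K \<and> mono_on {0..<r0} h \<and> (\<forall>r\<in>{0..<r0}. h r \<le> r) \<and>
     (\<forall>a\<in>K. \<forall>r. 0 < r \<and> r < r0 \<longrightarrow> (\<exists>z\<in>K. h r \<le> dist z a \<and> dist z a \<le> r))"

definition U1 :: "real \<Rightarrow> complex set \<Rightarrow> bool" where
  "U1 \<alpha> K \<longleftrightarrow> (\<exists>C>0. \<exists>r0>0. unif_perfect (\<lambda>t. C * h1 \<alpha> t) r0 K)"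

definition U2 :: "real \<Rightarrow> complex set \<Rightarrow> bool" where
  "U2 \<beta> K \<longleftrightarrow> (\<exists>C>0. \<exists>r0>0. unif_perfect (\<lambda>t. C * h2 \<beta> t) r0 K)"

end

theory Submission
  imports Defs "HOL-Complex_Analysis.Complex_Analysis"
begin


lemma log_mean:
  fixes b :: complex and s :: real
  assumes "0 < s" "s < cmod b"
  shows "((\<lambda>t. ln (cmod (b + of_real s * cis t))) has_integral (2*pi*ln(cmod b))) {0..2*pi}"
proof -
  have b0: "b \<noteq> 0" using assms by auto
  define f where "f w = Ln (1 + w / b)" for w
  have re: "0 < Re (1 + w / b)" if "cmod w \<le> s" for w
  proof -
    have "cmod (w/b) < 1" using that assms b0 by (simp add: norm_divide divide_less_eq)
    hence "\<bar>Re (w/b)\<bar> < 1" using abs_Re_le_cmod le_less_trans by blast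
    thus ?thesis by simp
  qed
  have hol: "f holomorphic_on cball 0 s"
    unfolding f_def
  proof (intro holomorphic_intros)
    show "\<And>z. z \<in> cball 0 s \<Longrightarrow> 1 + z / b \<notin> \<real>\<^sub>\<le>\<^sub>0"
    proof
      fix z assume z: "z \<in> cball 0 s" "1 + z / b \<in> \<real>\<^sub>\<le>\<^sub>0"
      hence "Re (1 + z/b) \<le> 0" by (simp add: complex_nonpos_Reals_iff)
      moreover have "0 < Re (1 + z/b)" using re[of z] z by simp
      ultimately show False by simp
    qed
  qed (use b0 in auto)
  have "((\<lambda>u. f u/(u-0)) has_contour_integral (2 * of_real pi * \<i> * f 0)) (circlepath 0 s)"
    using Cauchy_integral_circlepath_simple[OF hol, of 0] assms by simp
  hence "((\<lambda>u. f u/u) has_contour_integral 0) (circlepath 0 s)" by (simp add: f_def)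
  hence H: "((\<lambda>t. f (0 + s * cis t) / (0 + s * cis t) * s * \<i> * cis t) has_integral 0) {0..2*pi}"
    unfolding circlepath_def by (subst (asm) has_contour_integral_part_circlepath_iff) auto
  moreover have eq: "(\<lambda>t. f (0 + s * cis t) / (0 + s * cis t) * s * \<i> * cis t) = (\<lambda>t. \<i> * f (s * cis t))"
  proof
    fix t
    have "cis t \<noteq> 0" by simp
    then show "f (0 + s * cis t) / (0 + s * cis t) * s * \<i> * cis t = \<i> * f (s * cis t)"
      using assms by (simp add: field_simps)
  qed
  ultimately have "((\<lambda>t. \<i> * f (s * cis t)) has_integral 0) {0..2*pi}" by (simp only:)
  hence "((\<lambda>t. f (s * cis t)) has_integral 0) {0..2*pi}"
    by (subst (asm) has_integral_mult_right_iff) auto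
  hence "((\<lambda>t. Re (f (s * cis t))) has_integral 0) {0..2*pi}"
    using has_integral_Re[where I=0] by simp
  moreover have "Re (f (s * cis t)) = ln (cmod (b + of_real s * cis t)) - ln (cmod b)" for t
  proof -
    have "0 < Re (1 + s * cis t / b)" using re[of "s * cis t"] assms by (simp add: norm_mult)
    hence ne: "1 + s * cis t / b \<noteq> 0" by (metis less_irrefl zero_complex.simps(1))
    have "1 + s * cis t / b = (b + s * cis t) / b" using b0 by (simp add: field_simps)
    moreover have "b + s * cis t \<noteq> 0" using ne b0 \<open>1 + s * cis t / b = (b + s * cis t) / b\<close> by auto
    ultimately show ?thesis unfolding f_def using ne b0
      by (simp add: norm_divide ln_div)
  qed
  ultimately have "((\<lambda>t. ln (cmod (b + of_real s * cis t)) - ln (cmod b)) has_integral 0) {0..2*pi}"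
    by simp
  moreover have "((\<lambda>t. ln (cmod b)) has_integral (2*pi*ln(cmod b))) {0..2*pi}"
    using has_integral_const_real[of "ln (cmod b)" 0 "2*pi"] by (simp add: mult.commute)
  ultimately have "((\<lambda>t. (ln (cmod (b + of_real s * cis t)) - ln (cmod b)) + ln (cmod b)) has_integral (0 + 2*pi*ln(cmod b))) {0..2*pi}"
    by (rule has_integral_add)
  thus ?thesis by simp
qed


lemma lsc_nbhd:
  fixes W :: "complex \<Rightarrow> real"
  assumes "open A" "z \<in> A" "\<And>e. 0 < e \<Longrightarrow> \<forall>\<^sub>F w in at z within A. W z - e < W w" "m < W z"
  shows "\<exists>d>0. \<forall>w\<in>ball z d. w \<in> A \<and> m < W w"
proof -
  have "\<forall>\<^sub>F w in at z within A. W z - (W z - m) < W w" using assms(3)[of "W z - m"] assms(4) by simp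
  hence "\<forall>\<^sub>F w in at z within A. m < W w" by simp
  then obtain d1 where d1: "d1 > 0" "\<And>w. w \<in> A \<Longrightarrow> 0 < dist w z \<Longrightarrow> dist w z < d1 \<Longrightarrow> m < W w"
    by (auto simp: eventually_at)
  obtain d2 where d2: "d2 > 0" "ball z d2 \<subseteq> A" using assms(1,2) open_contains_ball by blast
  show ?thesis
  proof (intro exI[of _ "min d1 d2"] conjI ballI)
    fix w assume w: "w \<in> ball z (min d1 d2)"
    show "w \<in> A" using w d2 by auto
    show "m < W w"
    proof (cases "w = z")
      case True thus ?thesis using assms(4) by simp
    next
      case False
      have "w \<in> A" using w d2 by (auto simp: dist_commute)
      thus ?thesis using d1(2)[of w] w False by (auto simp: dist_commute)
    qed
  qed (use d1 d2 in auto)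
qed

lemma circle_le:
  fixes W :: "complex \<Rightarrow> real"
  assumes A: "open A" and t: "0 < t" and cb: "cball c t \<subseteq> A"
   and lsc: "\<And>z e. z \<in> A \<Longrightarrow> 0 < e \<Longrightarrow> \<forall>\<^sub>F w in at z within A. W z - e < W w"
   and ge: "\<And>w. w \<in> A \<Longrightarrow> m \<le> W w"
   and int: "(\<lambda>\<tau>. W (c + of_real t * cis \<tau>)) integrable_on {0..2*pi}"
   and le: "integral {0..2*pi} (\<lambda>\<tau>. W (c + of_real t * cis \<tau>)) / (2*pi) \<le> m"
   and w: "w \<in> sphere c t"
  shows "W w \<le> m"
proof (rule ccontr)
  assume "\<not> W w \<le> m"
  hence gt: "m < W w" by simp
  define \<eta> where "\<eta> = (W w - m)/2"
  have eta: "0 < \<eta>" "m + \<eta> < W w" using gt by (auto simp: \<eta>_def field_simps)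
  have wA: "w \<in> A" using w cb by auto
  obtain d where d: "d > 0" "\<And>x. x \<in> ball w d \<Longrightarrow> x \<in> A \<and> m + \<eta> < W x"
    using lsc_nbhd[OF A wA lsc[OF wA] eta(2)] by blast
  define g where "g \<tau> = c + of_real t * cis \<tau>" for \<tau>
  have "w \<in> path_image (circlepath c t)" using w t by simp
  then obtain x where x: "x \<in> {0..1}" "w = c + t * exp (2 * of_real pi * \<i> * of_real x)"
    unfolding path_image_def circlepath by auto
  define \<tau>0 where "\<tau>0 = 2 * pi * x"
  have t0: "0 \<le> \<tau>0" "\<tau>0 \<le> 2 * pi" using x(1) by (auto simp: \<tau>0_def)
  have wg: "w = g \<tau>0" unfolding x(2) g_def \<tau>0_def cis_conv_exp by (simp add: mult_ac)
  have "continuous (at \<tau>0) g" unfolding g_def cis_conv_exp by (intro continuous_intros)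
  then obtain \<delta> where \<delta>: "\<delta> > 0" "\<And>\<tau>. dist \<tau> \<tau>0 < \<delta> \<Longrightarrow> dist (g \<tau>) (g \<tau>0) < d"
    using d(1) unfolding continuous_at_eps_delta by blast
  define \<delta>' where "\<delta>' = min (\<delta>/2) pi"
  have dp: "0 < \<delta>'" "\<delta>' < \<delta>" "\<delta>' \<le> pi" using \<delta> pi_gt_zero by (auto simp: \<delta>'_def)
  define lo where "lo = (if \<tau>0 \<le> pi then \<tau>0 else \<tau>0 - \<delta>')"
  define I where "I = {lo..lo+\<delta>'}"
  have I_sub: "I \<subseteq> {0..2*pi}" using t0 dp by (auto simp: I_def lo_def)
  have I_close: "\<And>\<tau>. \<tau> \<in> I \<Longrightarrow> dist \<tau> \<tau>0 < \<delta>"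
    using dp by (auto simp: I_def lo_def dist_real_def split: if_splits)
  have gS: "g \<tau> \<in> A" for \<tau>
  proof -
    have "g \<tau> \<in> cball c t" using t by (simp add: g_def dist_norm norm_mult)
    thus ?thesis using cb by auto
  qed
  define f where "f \<tau> = m + (if \<tau> \<in> I then \<eta> else 0)" for \<tau>
  have hI: "((\<lambda>\<tau>. if \<tau> \<in> I then \<eta> else 0) has_integral (\<eta> * \<delta>')) {0..2*pi}"
  proof -
    have "((\<lambda>\<tau>. \<eta>) has_integral (\<eta> * \<delta>')) I"
      using has_integral_const_real[of \<eta> lo "lo+\<delta>'"] dp by (simp add: I_def mult.commute)
    thus ?thesis using has_integral_restrict[OF I_sub, of "\<lambda>_. \<eta>"] by simp
  qed
  have hm: "((\<lambda>\<tau>. m) has_integral (2*pi*m)) {0..2*pi}"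
    using has_integral_const_real[of m 0 "2*pi"] by (simp add: mult.commute)
  have hf: "(f has_integral (2*pi*m + \<eta> * \<delta>')) {0..2*pi}"
    unfolding f_def by (rule has_integral_add[OF hm hI])
  have "integral {0..2*pi} f \<le> integral {0..2*pi} (\<lambda>\<tau>. W (c + of_real t * cis \<tau>))"
  proof (rule integral_le)
    show "f integrable_on {0..2*pi}" using hf by blast
    show "(\<lambda>\<tau>. W (c + of_real t * cis \<tau>)) integrable_on {0..2*pi}" by (rule int)
    fix \<tau> assume "\<tau> \<in> {0..2*pi}"
    show "f \<tau> \<le> W (c + of_real t * cis \<tau>)"
    proof (cases "\<tau> \<in> I")
      case True
      hence "dist (g \<tau>) w < d" using \<delta>(2) I_close wg by auto
      hence "m + \<eta> < W (g \<tau>)" using d(2)[of "g \<tau>"] by (auto simp: dist_commute)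
      thus ?thesis using True by (simp add: f_def g_def)
    next
      case False thus ?thesis using ge[OF gS[of \<tau>]] by (simp add: f_def g_def)
    qed
  qed
  hence "2*pi*m + \<eta> * \<delta>' \<le> integral {0..2*pi} (\<lambda>\<tau>. W (c + of_real t * cis \<tau>))"
    using hf by (simp add: integral_unique)
  moreover have "integral {0..2*pi} (\<lambda>\<tau>. W (c + of_real t * cis \<tau>)) \<le> 2*pi*m"
    using le pi_gt_zero by (simp add: divide_le_eq mult.commute)
  moreover have "0 < \<eta> * \<delta>'" using eta dp by simp
  ultimately show False by simp
qed



lemma min_principle:
  fixes W :: "complex \<Rightarrow> real"
  assumes A: "open A" "connected A" "bounded A"
   and lsc: "\<And>z e. z \<in> A \<Longrightarrow> 0 < e \<Longrightarrow> \<forall>\<^sub>F w in at z within A. W z - e < W w"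
   and mean: "\<And>c s. 0 < s \<Longrightarrow> cball c s \<subseteq> A \<Longrightarrow>
      (\<lambda>t. W (c + of_real s * cis t)) integrable_on {0..2*pi} \<and>
      integral {0..2*pi} (\<lambda>t. W (c + of_real s * cis t)) / (2*pi) \<le> W c"
   and bdd: "\<And>w. w \<in> A \<Longrightarrow> B \<le> W w"
   and bdry: "\<And>\<zeta> e. \<zeta> \<in> frontier A \<Longrightarrow> 0 < e \<Longrightarrow> \<forall>\<^sub>F w in at \<zeta> within A. -e < W w"
   and z: "z \<in> A"
  shows "0 \<le> W z"
proof (rule ccontr)
  assume "\<not> 0 \<le> W z"
  hence Wz: "W z < 0" by simp
  define m where "m = Inf (W ` A)"
  have bb: "bdd_below (W ` A)" using bdd unfolding bdd_below_def by blast
  have mle: "m \<le> W w" if "w \<in> A" for w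
    unfolding m_def using bb that by (simp add: cInf_lower)
  have m0: "m < 0" using mle[OF z] Wz by simp
  have "\<exists>p\<in>A. W p = m"
  proof (rule ccontr)
    assume na: "\<not> (\<exists>p\<in>A. W p = m)"
    have "\<forall>n. \<exists>x\<in>A. W x < m + 1 / Suc n"
    proof
      fix n :: nat
      have "Inf (W ` A) < m + 1 / Suc n" unfolding m_def by simp
      then obtain y where "y \<in> W ` A" "y < m + 1 / Suc n"
        using cInf_lessD[of "W ` A"] z by blast
      thus "\<exists>x\<in>A. W x < m + 1 / Suc n" by blast
    qed
    then obtain x where x: "\<And>n. x n \<in> A" "\<And>n. W (x n) < m + 1 / Suc n" by metis
    have "compact (closure A)" using A(3) by (simp add: compact_closure)
    moreover have "\<forall>n. x n \<in> closure A" using x(1) closure_subset by blast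
    ultimately obtain l \<sigma> where l: "l \<in> closure A" "strict_mono \<sigma>" "(x \<circ> \<sigma>) \<longlonglongrightarrow> l"
      using seq_compactE[OF compact_imp_seq_compact] by metis
    have "\<exists>\<eta>>0. \<exists>d>0. \<forall>w\<in>A. dist w l < d \<longrightarrow> m + \<eta> \<le> W w"
    proof (cases "l \<in> A")
      case True
      have "m < W l" using mle[OF True] na True by force
      then obtain d where d: "d > 0" "\<forall>w\<in>ball l d. w \<in> A \<and> (m + W l)/2 < W w"
        using lsc_nbhd[OF A(1) True lsc[OF True], of "(m + W l)/2"] by (auto simp: field_simps)
      show ?thesis
      proof (rule exI[of _ "(W l - m)/2"], intro conjI exI[of _ d] ballI impI)
        show "0 < (W l - m)/2" using \<open>m < W l\<close> by simp
        show "0 < d" by (rule d(1))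
        fix w assume "w \<in> A" "dist w l < d"
        hence "w \<in> ball l d" by (simp add: dist_commute)
        hence "(m + W l)/2 < W w" using d(2) by blast
        thus "m + (W l - m)/2 \<le> W w" by (simp add: field_simps)
      qed
    next
      case False
      have lf: "l \<in> frontier A" using l(1) False A(1) by (simp add: frontier_def interior_open)
      have "\<forall>\<^sub>F w in at l within A. - (-m/2) < W w" using bdry[OF lf, of "-m/2"] m0 by simp
      then obtain d where d: "d > 0" "\<And>w. w \<in> A \<Longrightarrow> 0 < dist w l \<Longrightarrow> dist w l < d \<Longrightarrow> m/2 < W w"
        by (auto simp: eventually_at)
      show ?thesis
      proof (rule exI[of _ "-m/2"], intro conjI exI[of _ d] ballI impI)
        show "0 < -m/2" using m0 by simp
        show "0 < d" by (rule d(1))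
        fix w assume "w \<in> A" "dist w l < d"
        moreover have "w \<noteq> l" using \<open>w \<in> A\<close> False by auto
        ultimately show "m + - m / 2 \<le> W w" using d(2)[of w] by simp
      qed
    qed
    then obtain \<eta> d where ed: "\<eta> > 0" "d > 0" "\<And>w. w \<in> A \<Longrightarrow> dist w l < d \<Longrightarrow> m + \<eta> \<le> W w"
      by blast
    obtain N where N: "\<And>n. n \<ge> N \<Longrightarrow> dist ((x \<circ> \<sigma>) n) l < d"
      using l(3) ed(2) unfolding lim_sequentially by blast
    obtain M where M: "inverse (of_nat (Suc M)) < \<eta>" using reals_Archimedean ed(1) by blast
    define n where "n = max N M"
    have "\<sigma> n \<ge> n" using seq_suble[OF l(2)] by simp
    hence "\<sigma> n \<ge> M" by (simp add: n_def)
    hence "1 / real (Suc (\<sigma> n)) \<le> 1 / real (Suc M)" by (simp add: frac_le)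
    hence "W (x (\<sigma> n)) < m + \<eta>" using x(2)[of "\<sigma> n"] M by (simp add: inverse_eq_divide)
    moreover have "m + \<eta> \<le> W (x (\<sigma> n))" using ed(3)[OF x(1)] N[of n] by (simp add: n_def)
    ultimately show False by simp
  qed
  then obtain p where p: "p \<in> A" "W p = m" by blast
  define S where "S = {w\<in>A. W w \<le> m}"
  have openS: "open S"
    unfolding open_contains_ball
  proof
    fix c assume cS: "c \<in> S"
    hence cA: "c \<in> A" and Wc: "W c \<le> m" by (auto simp: S_def)
    obtain s where s: "s > 0" "cball c s \<subseteq> A" using A(1) cA open_contains_cball by blast
    have "ball c s \<subseteq> S"
    proof
      fix w assume w: "w \<in> ball c s"
      hence wA: "w \<in> A" using s by auto
      show "w \<in> S"
      proof (cases "w = c")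
        case True thus ?thesis using cS by simp
      next
        case False
        define t where "t = dist c w"
        have t: "0 < t" "t < s" using False w by (auto simp: t_def)
        have cbt: "cball c t \<subseteq> A" using s t by auto
        have mc: "(\<lambda>\<tau>. W (c + of_real t * cis \<tau>)) integrable_on {0..2*pi} \<and>
           integral {0..2*pi} (\<lambda>\<tau>. W (c + of_real t * cis \<tau>)) / (2*pi) \<le> W c"
          using mean[OF t(1) cbt] .
        have "W w \<le> m"
        proof (rule circle_le[OF A(1) t(1) cbt lsc])
          show "\<And>w. w \<in> A \<Longrightarrow> m \<le> W w" by (rule mle)
          show "(\<lambda>\<tau>. W (c + of_real t * cis \<tau>)) integrable_on {0..2*pi}" using mc by blast
          show "integral {0..2*pi} (\<lambda>\<tau>. W (c + of_real t * cis \<tau>)) / (2*pi) \<le> m" using mc Wc by linarith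
          show "w \<in> sphere c t" by (simp add: t_def)
        qed auto
        thus ?thesis using wA by (simp add: S_def)
      qed
    qed
    thus "\<exists>e>0. ball c e \<subseteq> S" using s by blast
  qed
  have openT: "open (A - S)"
    unfolding open_contains_ball
  proof
    fix q assume q: "q \<in> A - S"
    hence qA: "q \<in> A" and "m < W q" by (auto simp: S_def)
    then obtain d where d: "d > 0" "\<forall>w\<in>ball q d. w \<in> A \<and> m < W w"
      using lsc_nbhd[OF A(1) qA lsc[OF qA]] by blast
    hence "ball q d \<subseteq> A - S" by (auto simp: S_def)
    thus "\<exists>e>0. ball q e \<subseteq> A - S" using d by blast
  qed
  have "S \<inter> A = {} \<or> (A - S) \<inter> A = {}"
    by (rule connectedD[OF A(2) openS openT]) (auto simp: S_def)
  moreover have "p \<in> S \<inter> A" using p by (simp add: S_def)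
  ultimately have allm: "\<And>w. w \<in> A \<Longrightarrow> W w \<le> m" by (auto simp: S_def)
  have "A \<noteq> UNIV" using A(3) not_bounded_UNIV by auto
  moreover have "A \<noteq> {}" using z by auto
  ultimately obtain \<zeta> where \<zeta>: "\<zeta> \<in> frontier A" using frontier_not_empty by blast
  have "\<forall>\<^sub>F w in at \<zeta> within A. - (-m/2) < W w" using bdry[OF \<zeta>, of "-m/2"] m0 by simp
  then obtain d where d: "d > 0" "\<And>w. w \<in> A \<Longrightarrow> 0 < dist w \<zeta> \<Longrightarrow> dist w \<zeta> < d \<Longrightarrow> m/2 < W w"
    by (auto simp: eventually_at)
  have "\<zeta> \<in> closure A" "\<zeta> \<notin> A" using \<zeta> A(1) by (auto simp: frontier_def interior_open)
  hence "\<zeta> islimpt A" by (auto simp: closure_def)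
  then obtain w where w: "w \<in> A" "w \<noteq> \<zeta>" "dist w \<zeta> < d" using d(1) islimpt_approachable by blast
  have "m/2 < W w" using d(2)[OF w(1)] w by simp
  moreover have "W w \<le> m" using allm[OF w(1)] .
  ultimately show False using m0 by simp
qed



lemma near_cont:
  fixes v :: "complex \<Rightarrow> real"
  assumes "isCont v x" "0 < e"
  shows "\<forall>\<^sub>F w in at x within S. dist (v w) (v x) < e"
proof -
  have "(v \<longlongrightarrow> v x) (at x within S)"
    using continuous_at_imp_continuous_at_within[OF assms(1)] by (simp add: continuous_within)
  thus ?thesis using assms(2) tendstoD by blast
qed

lemma superharmonic_one: "superharmonic_on G (\<lambda>_. 1)"
  unfolding superharmonic_on_def by auto

lemma harm_lower:
  fixes \<Omega> :: "complex set" and a z :: complex and \<rho> r :: real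
  assumes \<rho>: "0 < \<rho>" "\<rho> < r"
    and AO: "ball a r - cball a \<rho> \<subseteq> \<Omega>" and SO: "sphere a r \<subseteq> \<Omega>"
    and z: "z \<in> ball a r - cball a \<rho>"
  shows "ln (cmod (z - a) / \<rho>) / ln (r / \<rho>) \<le> w_ar \<Omega> a r z"
proof -
  define G where "G = \<Omega> \<inter> ball a r"
  define E where "E = \<Omega> \<inter> sphere a r"
  define A where "A = ball a r - cball a \<rho>"
  define L where "L = ln (r / \<rho>)"
  have L: "0 < L" using \<rho> by (simp add: L_def)
  define v where "v w = ln (cmod (w - a) / \<rho>) / L" for w
  have vcont: "isCont v x" if "x \<noteq> a" for x
    unfolding v_def using that \<rho> L by (intro continuous_intros) auto
  have AG: "A \<subseteq> G" using AO by (auto simp: A_def G_def)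
  have zA: "z \<in> A" using z by (simp add: A_def)
  have aA: "a \<notin> A" using \<rho> by (simp add: A_def)
  have openA: "open A" unfolding A_def by (intro open_Diff) auto
  have connA: "connected A"
  proof -
    have "A = {x. \<rho> < norm(x - a) \<and> norm(x - a) < r}"
      by (auto simp: A_def dist_norm norm_minus_commute)
    thus ?thesis by (simp add: connected_annulus)
  qed
  have bddA: "bounded A" by (rule bounded_subset[of "ball a r"]) (auto simp: A_def)
  define U where "U = {u z |u. superharmonic_on G u \<and> (\<forall>w. 0 \<le> u w \<and> u w \<le> 1) \<and>
       (\<forall>\<zeta>\<in>frontier G. \<forall>e>0. \<forall>\<^sub>F w in at \<zeta> within G. indicator E \<zeta> - e \<le> u w)}"
  have wU: "w_ar \<Omega> a r z = Inf U"
    unfolding w_ar_def harmonic_measure_def U_def G_def E_def ..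
  have Une: "U \<noteq> {}"
  proof -
    have "(\<lambda>_. 1::real) z \<in> U" unfolding U_def
      by (intro CollectI exI[of _ "\<lambda>_. 1::real"] conjI superharmonic_one)
         (auto simp: indicator_def)
    thus ?thesis by blast
  qed
  have lower: "v z \<le> x" if "x \<in> U" for x
  proof -
    from that obtain u where x: "x = u z" and sh: "superharmonic_on G u"
      and ub: "\<And>w. 0 \<le> u w \<and> u w \<le> 1"
      and bd: "\<And>\<zeta> e. \<zeta> \<in> frontier G \<Longrightarrow> 0 < e \<Longrightarrow> \<forall>\<^sub>F w in at \<zeta> within G. indicator E \<zeta> - e \<le> u w"
      unfolding U_def by blast
    have lscG: "\<And>z e. z \<in> G \<Longrightarrow> 0 < e \<Longrightarrow> \<forall>\<^sub>F w in at z within G. u z - e < u w"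
      and meanG: "\<And>c s. 0 < s \<Longrightarrow> cball c s \<subseteq> G \<Longrightarrow>
        (\<lambda>t. u (c + of_real s * cis t)) integrable_on {0..2*pi} \<and>
        integral {0..2*pi} (\<lambda>t. u (c + of_real s * cis t)) / (2*pi) \<le> u c"
      using sh unfolding superharmonic_on_def by auto
    have sub: "\<And>x P. (\<forall>\<^sub>F w in at x within G. P w) \<Longrightarrow> (\<forall>\<^sub>F w in at x within A. P w)"
      using filter_leD[OF at_le[OF AG]] by blast
    define W where "W w = u w - v w" for w
    have "0 \<le> W z"
    proof (rule min_principle[OF openA connA bddA _ _ _ _ zA])
      fix y e assume yA: "y \<in> A" and e: "(0::real) < e"
      have "\<forall>\<^sub>F w in at y within A. u y - e/2 < u w" using sub lscG[of y "e/2"] yA AG e by auto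
      moreover have "\<forall>\<^sub>F w in at y within A. dist (v w) (v y) < e/2"
        using near_cont[OF vcont, of y "e/2"] yA aA e by auto
      ultimately show "\<forall>\<^sub>F w in at y within A. W y - e < W w"
      proof eventually_elim
        case (elim w) thus ?case unfolding W_def dist_real_def by arith
      qed
    next
      fix c s assume s: "(0::real) < s" and cs: "cball c s \<subseteq> A"
      have mu: "(\<lambda>t. u (c + of_real s * cis t)) integrable_on {0..2*pi} \<and>
        integral {0..2*pi} (\<lambda>t. u (c + of_real s * cis t)) / (2*pi) \<le> u c"
        using meanG[OF s] cs AG by blast
      have "s < cmod (c - a)"
      proof (rule ccontr)
        assume "\<not> s < cmod (c - a)"
        hence "a \<in> cball c s" by (simp add: dist_norm norm_minus_commute)
        thus False using cs aA by blast
      qed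
      hence lm: "((\<lambda>t. ln (cmod ((c - a) + of_real s * cis t))) has_integral (2*pi*ln(cmod (c - a)))) {0..2*pi}"
        using log_mean[OF s] by blast
      have ca: "c \<noteq> a" using \<open>s < cmod (c - a)\<close> s by auto
      have hv: "((\<lambda>t. v (c + of_real s * cis t)) has_integral (2*pi * v c)) {0..2*pi}"
      proof -
        have "((\<lambda>t. ln (cmod ((c - a) + of_real s * cis t)) - ln \<rho>) has_integral (2*pi*ln(cmod (c - a)) - 2*pi*ln \<rho>)) {0..2*pi}"
          using has_integral_diff[OF lm has_integral_const_real[of "ln \<rho>" 0 "2*pi"]] by (simp add: mult.commute)
        hence "((\<lambda>t. (ln (cmod ((c - a) + of_real s * cis t)) - ln \<rho>) / L) has_integral ((2*pi*ln(cmod (c - a)) - 2*pi*ln \<rho>) / L)) {0..2*pi}"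
          by (rule has_integral_divide)
        moreover have "v (c + of_real s * cis t) = (ln (cmod ((c - a) + of_real s * cis t)) - ln \<rho>) / L" for t
        proof -
          have "c + of_real s * cis t \<in> A" using cs s by (auto simp: dist_norm norm_mult)
          hence "c + of_real s * cis t \<noteq> a" using aA by auto
          thus ?thesis using \<rho> by (simp add: v_def ln_div algebra_simps)
        qed
        moreover have "2*pi * v c = (2*pi*ln(cmod (c - a)) - 2*pi*ln \<rho>) / L"
          using ca \<rho> by (simp add: v_def ln_div algebra_simps)
        ultimately show ?thesis by simp
      qed
      have hvi: "(\<lambda>t. v (c + of_real s * cis t)) integrable_on {0..2*pi}" using hv by blast
      have "(\<lambda>t. W (c + of_real s * cis t)) integrable_on {0..2*pi}"
        unfolding W_def by (rule integrable_diff[OF conjunct1[OF mu] hvi])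
      moreover have "integral {0..2*pi} (\<lambda>t. W (c + of_real s * cis t)) =
         integral {0..2*pi} (\<lambda>t. u (c + of_real s * cis t)) - 2*pi * v c"
        unfolding W_def integral_diff[OF conjunct1[OF mu] hvi] integral_unique[OF hv] ..
      ultimately show "(\<lambda>t. W (c + of_real s * cis t)) integrable_on {0..2*pi} \<and>
        integral {0..2*pi} (\<lambda>t. W (c + of_real s * cis t)) / (2*pi) \<le> W c"
        using mu by (simp add: W_def diff_divide_distrib)
    next
      fix w assume "w \<in> A"
      hence "cmod (w - a) < r" "0 < cmod (w - a)" using \<rho> by (auto simp: A_def dist_norm norm_minus_commute)
      hence "ln (cmod (w - a) / \<rho>) \<le> L" using \<rho> by (simp add: L_def divide_right_mono)
      hence "v w \<le> 1" using L by (simp add: v_def)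
      thus "-1 \<le> W w" using ub[of w] by (simp add: W_def)
    next
      fix \<zeta> e assume \<zeta>: "\<zeta> \<in> frontier A" and e: "(0::real) < e"
      have "closure A \<subseteq> cball a r - ball a \<rho>"
        by (rule closure_minimal) (auto simp: A_def intro: closed_Diff)
      hence cl: "\<zeta> \<in> cball a r - ball a \<rho>" "\<zeta> \<notin> A"
        using \<zeta> openA by (auto simp: frontier_def interior_open)
      show "\<forall>\<^sub>F w in at \<zeta> within A. - e < W w"
      proof (cases "dist a \<zeta> = \<rho>")
        case True
        hence za: "\<zeta> \<noteq> a" using \<rho> by auto
        have v0: "v \<zeta> = 0" using True \<rho> by (simp add: v_def dist_norm norm_minus_commute)
        have "\<forall>\<^sub>F w in at \<zeta> within A. dist (v w) (v \<zeta>) < e" using near_cont[OF vcont[OF za] e] .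
        thus ?thesis
        proof eventually_elim
          case (elim w) with ub[of w] v0 show ?case unfolding W_def dist_real_def by arith
        qed
      next
        case False
        hence dr: "dist a \<zeta> = r" using cl by (auto simp: A_def)
        hence za: "\<zeta> \<noteq> a" using \<rho> by auto
        have v1: "v \<zeta> = 1" using dr \<rho> L by (simp add: v_def dist_norm norm_minus_commute L_def)
        have zO: "\<zeta> \<in> \<Omega>" using SO dr by auto
        have ind: "indicator E \<zeta> = (1::real)" using zO dr by (simp add: E_def indicator_def)
        have "\<zeta> \<in> closure G" using \<zeta> closure_mono[OF AG] by (auto simp: frontier_def)
        moreover have "\<zeta> \<notin> interior G" using interior_subset[of G] dr by (auto simp: G_def)
        ultimately have zG: "\<zeta> \<in> frontier G" by (simp add: frontier_def)
        have "\<forall>\<^sub>F w in at \<zeta> within A. 1 - e/2 \<le> u w" using sub bd[OF zG, of "e/2"] e ind by auto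
        moreover have "\<forall>\<^sub>F w in at \<zeta> within A. dist (v w) (v \<zeta>) < e/4" using near_cont[OF vcont[OF za], of "e/4"] e by auto
        ultimately show ?thesis
        proof eventually_elim
          case (elim w) with v1 e show ?case unfolding W_def dist_real_def by arith
        qed
      qed
    qed
    thus ?thesis by (simp add: W_def x)
  qed
  have "v z \<le> Inf U"
    by (rule cInf_greatest[OF Une lower])
  thus ?thesis by (simp add: wU v_def L_def)
qed



lemma sphere_closure_annulus:
  fixes a w :: complex
  assumes "0 < \<rho>" "\<rho> < r" "w \<in> sphere a r"
  shows "w \<in> closure (ball a r - cball a \<rho>)"
  unfolding closure_approachable
proof (intro allI impI)
  fix e :: real assume e: "0 < e"
  define lam where "lam = min (e/2) ((r - \<rho>)/2) / r"
  have r: "0 < r" using assms by simp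
  have lr: "lam * r = min (e/2) ((r - \<rho>)/2)" using r by (simp add: lam_def)
  have l0: "0 < lam" unfolding lam_def using e assms r by simp
  have l23: "lam * r < e" "lam * r < r - \<rho>" unfolding lr using e assms by (auto simp: min_def)
  note l = l0 l23
  have "lam * r < 1 * r" using l(3) assms(1) by simp
  hence l1: "lam < 1" using r by (metis mult_right_less_imp_less less_imp_le)
  define y where "y = a + of_real (1 - lam) * (w - a)"
  have nw: "cmod (w - a) = r" using assms(3) by (simp add: dist_norm norm_minus_commute)
  have yae: "y - a = of_real (1 - lam) * (w - a)" by (simp add: y_def)
  have "cmod (y - a) = \<bar>1 - lam\<bar> * cmod (w - a)" by (simp only: yae norm_mult norm_of_real)
  hence ya: "cmod (y - a) = (1 - lam) * r" using l1 nw by simp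
  have yw: "cmod (y - w) = lam * r"
  proof -
    have "y - w = - (of_real lam * (w - a))" by (simp add: y_def algebra_simps)
    thus ?thesis using l nw by (simp add: norm_mult)
  qed
  show "\<exists>y\<in>ball a r - cball a \<rho>. dist y w < e"
  proof (intro bexI[of _ y])
    show "dist y w < e" using yw l by (simp add: dist_norm)
    have "\<rho> < (1 - lam) * r" using l(3) by (simp add: algebra_simps)
    moreover have "(1 - lam) * r < r" using l r by simp
    ultimately show "y \<in> ball a r - cball a \<rho>" using ya by (simp add: dist_norm norm_minus_commute)
  qed
qed

lemma gap_lemma:
  fixes \<Omega> :: "complex set" and a :: complex
  assumes op: "open \<Omega>" and co: "connected \<Omega>"
    and HD: "\<And>z. z \<in> \<Omega> \<inter> sphere a hr \<Longrightarrow> w_ar \<Omega> a r z \<le> 1 - \<epsilon>"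
    and pd: "ball p \<delta> \<subseteq> \<Omega>"
    and a: "a \<in> frontier \<Omega>"
    and rr: "0 < \<rho>" "\<rho> < hr" "hr < r" "r \<le> \<delta>"
    and rat: "(1 - \<epsilon>) * ln (r / \<rho>) < ln (hr / \<rho>)"
  shows "\<exists>z\<in>frontier \<Omega>. \<rho> \<le> dist z a \<and> dist z a \<le> r"
proof (rule ccontr)
  assume "\<not> ?thesis"
  hence nf: "\<And>z. \<rho> \<le> dist a z \<Longrightarrow> dist a z \<le> r \<Longrightarrow> z \<notin> frontier \<Omega>" by (auto simp: dist_commute)
  define A where "A = ball a r - cball a \<rho>"
  have openA: "open A" unfolding A_def by (intro open_Diff) auto
  have connA: "connected A"
  proof -
    have "A = {x. \<rho> < norm(x - a) \<and> norm(x - a) < r}"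
      by (auto simp: A_def dist_norm norm_minus_commute)
    thus ?thesis by (simp add: connected_annulus)
  qed
  have Anf: "w \<notin> frontier \<Omega>" if "w \<in> A" for w using that nf by (auto simp: A_def)
  have fr: "frontier \<Omega> = closure \<Omega> - \<Omega>" using op by (simp add: frontier_def interior_open)
  have "\<Omega> \<inter> A = {} \<or> (- closure \<Omega>) \<inter> A = {}"
  proof (rule connectedD[OF connA op])
    show "open (- closure \<Omega>)" by auto
    show "\<Omega> \<inter> - closure \<Omega> \<inter> A = {}" using closure_subset by auto
    show "A \<subseteq> \<Omega> \<union> - closure \<Omega>" using Anf fr by auto
  qed
  moreover have "\<Omega> \<inter> A \<noteq> {}"
  proof
    assume OA: "\<Omega> \<inter> A = {}"
    define s where "s = (\<rho> + r)/2"
    have s: "\<rho> < s" "s < r" using rr by (auto simp: s_def)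
    have "ball a s \<inter> \<Omega> = {} \<or> (- cball a s) \<inter> \<Omega> = {}"
    proof (rule connectedD[OF co])
      show "open (ball a s)" "open (- cball a s)" by auto
      show "ball a s \<inter> - cball a s \<inter> \<Omega> = {}" by auto
      show "\<Omega> \<subseteq> ball a s \<union> - cball a s"
      proof
        fix w assume w: "w \<in> \<Omega>"
        hence "w \<notin> A" using OA by auto
        hence "dist a w \<noteq> s" using s by (auto simp: A_def)
        thus "w \<in> ball a s \<union> - cball a s" by auto
      qed
    qed
    moreover have "ball a s \<inter> \<Omega> \<noteq> {}"
    proof -
      obtain x where "x \<in> \<Omega>" "dist a x < s" using a s rr unfolding frontier_straddle
        by (meson less_trans)
      thus ?thesis by auto
    qed
    ultimately have "\<Omega> \<subseteq> cball a s" by auto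
    hence "ball p \<delta> \<subseteq> cball a s" using pd by auto
    hence "\<delta> \<le> s" using rr s zero_le_dist[of p a] unfolding ball_subset_cball_iff by linarith
    thus False using s rr by simp
  qed
  ultimately have "A \<subseteq> closure \<Omega>" by auto
  hence AO: "A \<subseteq> \<Omega>" using Anf fr by auto
  have SO: "sphere a r \<subseteq> \<Omega>"
  proof
    fix w assume w: "w \<in> sphere a r"
    have "w \<in> closure A" unfolding A_def by (rule sphere_closure_annulus[OF rr(1) _ w]) (use rr in simp)
    hence "w \<in> closure \<Omega>" using closure_mono[OF AO] by auto
    moreover have "w \<notin> frontier \<Omega>" using nf[of w] w rr by simp
    ultimately show "w \<in> \<Omega>" using fr by auto
  qed
  define z where "z = a + of_real hr"
  have za: "cmod (z - a) = hr" using rr by (simp add: z_def)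
  have zA: "z \<in> A" using za rr by (simp add: A_def dist_norm norm_minus_commute)
  have "z \<in> \<Omega>" using AO zA by blast
  hence "z \<in> \<Omega> \<inter> sphere a hr" using za by (simp add: dist_norm norm_minus_commute)
  hence "w_ar \<Omega> a r z \<le> 1 - \<epsilon>" by (rule HD)
  moreover have "ln (cmod (z - a) / \<rho>) / ln (r / \<rho>) \<le> w_ar \<Omega> a r z"
    using harm_lower[OF rr(1) _ AO[unfolded A_def] SO zA[unfolded A_def]] rr by simp
  ultimately have "ln (hr / \<rho>) / ln (r / \<rho>) \<le> 1 - \<epsilon>" using za by simp
  moreover have "0 < ln (r / \<rho>)" using rr by simp
  ultimately have "ln (hr / \<rho>) \<le> (1 - \<epsilon>) * ln (r / \<rho>)" by (simp add: divide_le_eq)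
  thus False using rat by simp
qed



lemma ln_lt_of_lt_exp: "0 < (r::real) \<Longrightarrow> r < exp K \<Longrightarrow> ln r < K"
  using ln_less_cancel_iff[of r "exp K"] by simp

lemma part1:
  fixes \<Omega> :: "complex set"
  assumes op: "open \<Omega>" and co: "connected \<Omega>" and ne: "\<Omega> \<noteq> {}"
    and al: "1 < \<alpha>" and D: "Delta1 \<alpha> \<Omega>"
  shows "\<exists>\<alpha>'>\<alpha>. U1 \<alpha>' (frontier \<Omega>)"
proof -
  obtain C where C: "C > 0" "Delta_cond (\<lambda>t. C * h1 \<alpha> t) \<Omega>" using D by (auto simp: Delta1_def)
  obtain \<epsilon> r0 where ep: "0 < \<epsilon>" "\<epsilon> < 1" "r0 > 0"
    and HD: "\<And>a r z. a \<in> frontier \<Omega> \<Longrightarrow> 0 < r \<Longrightarrow> r < r0 \<Longrightarrow> z \<in> \<Omega> \<inter> sphere a (C * h1 \<alpha> r) \<Longrightarrow> w_ar \<Omega> a r z \<le> 1 - \<epsilon>"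
    using C(2) unfolding Delta_cond_def by blast
  obtain p where p: "p \<in> \<Omega>" using ne by blast
  obtain \<delta> where dl: "\<delta> > 0" "ball p \<delta> \<subseteq> \<Omega>" using op p open_contains_ball by blast
  define \<alpha>' where "\<alpha>' = \<alpha>/\<epsilon> + 1"
  have "\<alpha> < \<alpha>/\<epsilon>" using ep al by (simp add: less_divide_eq)
  hence aa: "\<alpha> < \<alpha>'" by (simp add: \<alpha>'_def)
  define r1 where "r1 = min (min r0 \<delta>) (min (min 1 C) (min (exp (ln C/(\<alpha>'-\<alpha>))) (exp (-ln C/(\<alpha>-1)))))"
  have r1: "0 < r1" using ep dl C by (simp add: r1_def)
  have "U1 \<alpha>' (frontier \<Omega>)"
    unfolding U1_def
  proof (rule exI[of _ "1::real"], rule conjI, simp, rule exI[of _ r1], rule conjI[OF r1])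
    show "unif_perfect (\<lambda>t. 1 * h1 \<alpha>' t) r1 (frontier \<Omega>)"
      unfolding unif_perfect_def
    proof (intro conjI ballI allI impI)
      show "closed (frontier \<Omega>)" by simp
      show "mono_on {0..<r1} (\<lambda>t. 1 * h1 \<alpha>' t)"
      proof (rule mono_onI)
        fix s t :: real assume "s \<in> {0..<r1}" "t \<in> {0..<r1}" "s \<le> t"
        moreover have "0 \<le> \<alpha>'" using aa al by simp
        ultimately show "1 * h1 \<alpha>' s \<le> 1 * h1 \<alpha>' t" by (simp add: h1_def powr_mono2)
      qed
      fix r assume r: "r \<in> {0..<r1}"
      hence "r \<le> 1" by (simp add: r1_def)
      hence "r powr \<alpha>' \<le> r powr 1" using r aa al by (intro powr_mono') auto
      thus "1 * h1 \<alpha>' r \<le> r" using r by (simp add: h1_def powr_one)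
    next
      fix a r assume a: "a \<in> frontier \<Omega>" and r: "0 < r \<and> r < r1"
      define x where "x = ln r"
      define \<rho> where "\<rho> = r powr \<alpha>'"
      define hr where "hr = C * r powr \<alpha>"
      have rb: "r < r0" "r < \<delta>" "r < 1" "r < C" "r < exp (ln C/(\<alpha>'-\<alpha>))" "r < exp (-ln C/(\<alpha>-1))"
        using r by (auto simp: r1_def)
      have x1: "x < ln C" using rb(4) r C unfolding x_def by simp
      have x2: "x < ln C/(\<alpha>'-\<alpha>)" using ln_lt_of_lt_exp[OF _ rb(5)] r by (simp add: x_def)
      have x3: "x < -ln C/(\<alpha>-1)" using ln_lt_of_lt_exp[OF _ rb(6)] r by (simp add: x_def)
      have rp: "0 < \<rho>" "0 < hr" using r C by (auto simp: \<rho>_def hr_def)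
      have lr: "ln \<rho> = \<alpha>' * x" by (simp add: \<rho>_def x_def)
      have lh: "ln hr = ln C + \<alpha> * x" using r C by (simp add: hr_def x_def ln_mult)
      have "x * (\<alpha>'-\<alpha>) < (ln C/(\<alpha>'-\<alpha>)) * (\<alpha>'-\<alpha>)" by (rule mult_strict_right_mono[OF x2]) (use aa in simp)
      hence "(\<alpha>'-\<alpha>) * x < ln C" using aa by (simp add: mult.commute)
      hence "ln \<rho> < ln hr" using lr lh by (simp add: algebra_simps)
      hence c1: "\<rho> < hr" using rp by simp
      have "x * (\<alpha>-1) < (-ln C/(\<alpha>-1)) * (\<alpha>-1)" by (rule mult_strict_right_mono[OF x3]) (use al in simp)
      hence "(\<alpha>-1) * x < -ln C" using al by (simp add: mult.commute)
      hence "ln hr < ln r" using lh by (simp add: x_def algebra_simps)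
      hence c2: "hr < r" using rp r by simp
      have lrr: "ln (r/\<rho>) = x - \<alpha>' * x" using r rp lr by (simp add: ln_div x_def)
      have lhr: "ln (hr/\<rho>) = ln C + \<alpha> * x - \<alpha>' * x" using rp lr lh by (simp add: ln_div)
      define k where "k = \<alpha>/\<epsilon>"
      have ek: "\<epsilon> * k = \<alpha>" using ep by (simp add: k_def)
      have "(1 - \<epsilon>) * (x - \<alpha>' * x) = - (k * x) + (\<epsilon> * k) * x"
        unfolding \<alpha>'_def k_def[symmetric] by (simp add: algebra_simps)
      also have "\<dots> = (ln C + \<alpha> * x - \<alpha>' * x) - (ln C - x)"
        unfolding ek \<alpha>'_def k_def[symmetric] by (simp add: algebra_simps)
      finally have "(1 - \<epsilon>) * (x - \<alpha>' * x) = (ln C + \<alpha> * x - \<alpha>' * x) - (ln C - x)" .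
      hence c3: "(1 - \<epsilon>) * ln (r/\<rho>) < ln (hr/\<rho>)" using x1 lrr lhr by simp
      obtain z where z: "z \<in> frontier \<Omega>" "\<rho> \<le> dist z a" "dist z a \<le> r"
      proof (rule bexE[OF gap_lemma[OF op co _ dl(2) a rp(1) c1 c2 _ c3]])
        show "\<And>z. z \<in> \<Omega> \<inter> sphere a hr \<Longrightarrow> w_ar \<Omega> a r z \<le> 1 - \<epsilon>"
          using HD[OF a _ rb(1)] r by (simp add: hr_def h1_def)
        show "r \<le> \<delta>" using rb by simp
      qed blast
      thus "\<exists>z\<in>frontier \<Omega>. 1 * h1 \<alpha>' r \<le> dist z a \<and> dist z a \<le> r"
        by (auto simp: h1_def \<rho>_def)
    qed
  qed
  thus ?thesis using aa by blast
qed





lemma part2: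
  fixes \<Omega> :: "complex set"
  assumes op: "open \<Omega>" and co: "connected \<Omega>" and ne: "\<Omega> \<noteq> {}"
    and be: "0 < \<beta>" and D: "Delta2 \<beta> \<Omega>"
  shows "\<exists>\<beta>'>\<beta>. U2 \<beta>' (frontier \<Omega>)"
proof -
  obtain C where C: "C > 0" "Delta_cond (\<lambda>t. C * h2 \<beta> t) \<Omega>" using D unfolding Delta2_def by blast
  from C(2) obtain \<epsilon> where ep: "0 < \<epsilon>" "\<epsilon> < 1"
    and "\<exists>r0>0. \<forall>a\<in>frontier \<Omega>. \<forall>r. 0 < r \<and> r < r0 \<longrightarrow>
      (\<forall>z\<in>\<Omega> \<inter> sphere a (C * h2 \<beta> r). w_ar \<Omega> a r z \<le> 1 - \<epsilon>)"
    unfolding Delta_cond_def by blast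
  then obtain r0 where r0: "r0 > 0" and HD: "\<forall>a\<in>frontier \<Omega>. \<forall>r. 0 < r \<and> r < r0 \<longrightarrow>
      (\<forall>z\<in>\<Omega> \<inter> sphere a (C * h2 \<beta> r). w_ar \<Omega> a r z \<le> 1 - \<epsilon>)" by blast
  obtain p where p: "p \<in> \<Omega>" using ne by blast
  obtain \<delta> where dl: "\<delta> > 0" "ball p \<delta> \<subseteq> \<Omega>" using op p open_contains_ball by blast
  define \<beta>' where "\<beta>' = (\<beta> + 1)/\<epsilon>"
  have eb: "\<epsilon> * \<beta>' = \<beta> + 1" using ep by (simp add: \<beta>'_def)
  have "\<beta> + 1 < \<beta>'" using ep be by (simp add: \<beta>'_def less_divide_eq)
  hence bb: "\<beta> < \<beta>'" by simp
  define M where "M = max (max 0 (ln C/\<beta>)) (max (-ln C) (-ln C/(\<beta>'-\<beta>)))"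
  define r1 where "r1 = min (min r0 \<delta>) (min 1 (exp (- exp M)))"
  have r1: "0 < r1" using r0 dl by (simp add: r1_def)
  have ypos: "1 < ln (1/t)" if "0 < t" "t < r1" for t
  proof -
    have "t < exp (- exp M)" using that by (simp add: r1_def)
    hence "ln t < - exp M" using ln_lt_of_lt_exp that(1) by blast
    moreover have "1 \<le> exp M" using one_le_exp_iff[of M] by (simp add: M_def)
    ultimately have "ln t < -1" by linarith
    thus ?thesis using that(1) by (simp add: ln_div)
  qed
  have lyM: "M < ln (ln (1/t))" if "0 < t" "t < r1" for t
  proof -
    have "t < exp (- exp M)" using that by (simp add: r1_def)
    hence "ln t < - exp M" using ln_lt_of_lt_exp that(1) by blast
    hence "exp M < ln (1/t)" using that(1) by (simp add: ln_div)
    moreover have "0 < ln (1/t)" using ypos[OF that] by simp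
    ultimately show ?thesis using ln_less_cancel_iff[of "exp M" "ln (1/t)"] by simp
  qed
  have "U2 \<beta>' (frontier \<Omega>)"
    unfolding U2_def
  proof (rule exI[of _ "1::real"], rule conjI, simp, rule exI[of _ r1], rule conjI[OF r1])
    show "unif_perfect (\<lambda>t. 1 * h2 \<beta>' t) r1 (frontier \<Omega>)"
      unfolding unif_perfect_def
    proof (intro conjI ballI allI impI)
      show "closed (frontier \<Omega>)" by simp
      show "mono_on {0..<r1} (\<lambda>t. 1 * h2 \<beta>' t)"
      proof (rule mono_onI)
        fix s t :: real assume s: "s \<in> {0..<r1}" and t: "t \<in> {0..<r1}" and st: "s \<le> t"
        show "1 * h2 \<beta>' s \<le> 1 * h2 \<beta>' t"
        proof (cases "s = 0")
          case True
          have "0 \<le> t * ln (1/t) powr (-\<beta>')" using t by simp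
          thus ?thesis using True by (simp add: h2_def)
        next
          case False
          hence s0: "0 < s" using s by simp
          have "ln (1/t) \<le> ln (1/s)" using s0 st by (simp add: ln_div)
          moreover have "1 < ln (1/t)" using ypos[of t] s0 st t by auto
          hence lt: "0 < ln (1/t)" by linarith
          note lt
          moreover have "-\<beta>' \<le> 0" using bb be by simp
          ultimately have "ln (1/s) powr (-\<beta>') \<le> ln (1/t) powr (-\<beta>')"
            using powr_mono2'[of "-\<beta>'" "ln (1/t)" "ln (1/s)"] by blast
          hence "s * ln (1/s) powr (-\<beta>') \<le> t * ln (1/t) powr (-\<beta>')"
            using st s0 by (intro mult_mono) auto
          thus ?thesis by (simp add: h2_def)
        qed
      qed
      fix r assume r: "r \<in> {0..<r1}"
      show "1 * h2 \<beta>' r \<le> r"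
      proof (cases "r = 0")
        case True thus ?thesis by (simp add: h2_def)
      next
        case False
        hence r0': "0 < r" using r by simp
        have "1 \<le> ln (1/r) powr \<beta>'" using ypos[of r] r0' r bb be by (intro ge_one_powr_ge_zero) auto
        hence "ln (1/r) powr (-\<beta>') \<le> 1" by (simp add: powr_minus inverse_le_1_iff)
        hence "r * ln (1/r) powr (-\<beta>') \<le> r * 1" using r0' by (intro mult_left_mono) auto
        thus ?thesis by (simp add: h2_def)
      qed
    next
      fix a r assume a: "a \<in> frontier \<Omega>" and r: "0 < r \<and> r < r1"
      define y where "y = ln (1/r)"
      define ly where "ly = ln y"
      define \<rho> where "\<rho> = r * y powr (-\<beta>')"
      define hr where "hr = C * (r * y powr (-\<beta>))"
      have rb: "r < r0" "r < \<delta>" using r by (auto simp: r1_def)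
      have y1: "1 < y" using ypos r by (simp add: y_def)
      have lM: "M < ly" using lyM r by (simp add: y_def ly_def)
      have m1: "ln C/\<beta> < ly" "-ln C < ly" "-ln C/(\<beta>'-\<beta>) < ly" using lM by (auto simp: M_def)
      have rp: "0 < \<rho>" "0 < hr" using r C y1 by (auto simp: \<rho>_def hr_def)
      have lr: "ln \<rho> = ln r - \<beta>' * ly" using r y1 by (simp add: \<rho>_def ly_def ln_mult)
      have lh: "ln hr = ln C + ln r - \<beta> * ly" using r y1 C by (simp add: hr_def ly_def ln_mult)
      have "(-ln C/(\<beta>'-\<beta>)) * (\<beta>'-\<beta>) < ly * (\<beta>'-\<beta>)" by (rule mult_strict_right_mono[OF m1(3)]) (use bb in simp)
      hence "- ln C < (\<beta>'-\<beta>) * ly" using bb by (simp add: mult.commute)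
      hence "ln \<rho> < ln hr" using lr lh by (simp add: algebra_simps)
      hence c1: "\<rho> < hr" using rp by simp
      have "(ln C/\<beta>) * \<beta> < ly * \<beta>" by (rule mult_strict_right_mono[OF m1(1)]) (use be in simp)
      hence "ln C < \<beta> * ly" using be by (simp add: mult.commute)
      hence "ln hr < ln r" using lh by (simp add: algebra_simps)
      hence c2: "hr < r" using rp r by simp
      have lrr: "ln (r/\<rho>) = \<beta>' * ly" using r rp lr by (simp add: ln_div)
      have lhr: "ln (hr/\<rho>) = ln C + (\<beta>' - \<beta>) * ly" using rp lr lh by (simp add: ln_div algebra_simps)
      have "(1 - \<epsilon>) * (\<beta>' * ly) = \<beta>' * ly - (\<epsilon> * \<beta>') * ly" by (simp add: algebra_simps)
      also have "\<dots> = (ln C + (\<beta>' - \<beta>) * ly) - (ln C + ly)" unfolding eb by (simp add: algebra_simps)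
      finally have "(1 - \<epsilon>) * (\<beta>' * ly) = (ln C + (\<beta>' - \<beta>) * ly) - (ln C + ly)" .
      hence c3: "(1 - \<epsilon>) * ln (r/\<rho>) < ln (hr/\<rho>)" using m1(2) lrr lhr by simp
      have hreq: "hr = C * h2 \<beta> r" by (simp add: hr_def h2_def y_def)
      obtain z where z: "z \<in> frontier \<Omega>" "\<rho> \<le> dist z a" "dist z a \<le> r"
      proof (rule bexE[OF gap_lemma[OF op co _ dl(2) a rp(1) c1 c2 _ c3]])
        show "\<And>z. z \<in> \<Omega> \<inter> sphere a hr \<Longrightarrow> w_ar \<Omega> a r z \<le> 1 - \<epsilon>"
          using HD a rb(1) r unfolding hreq by blast
        show "r \<le> \<delta>" using rb by simp
      qed blast
      have "1 * h2 \<beta>' r = \<rho>" by (simp add: h2_def \<rho>_def y_def)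
      thus "\<exists>z\<in>frontier \<Omega>. 1 * h2 \<beta>' r \<le> dist z a \<and> dist z a \<le> r"
        using z by auto
    qed
  qed
  thus ?thesis using bb by blast
qed


theorem proposition4p2:
  fixes \<Omega> :: "complex set"
  assumes "open \<Omega>" and "connected \<Omega>" and "\<Omega> \<noteq> {}"
  shows "(\<forall>\<alpha>>1. Delta1 \<alpha> \<Omega> \<longrightarrow> (\<exists>\<alpha>'>\<alpha>. U1 \<alpha>' (frontier \<Omega>)))
       \<and> (\<forall>\<beta>>0. Delta2 \<beta> \<Omega> \<longrightarrow> (\<exists>\<beta>'>\<beta>. U2 \<beta>' (frontier \<Omega>)))"
  using part1[OF assms] part2[OF assms] by blast

end
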